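(* Let $b$ be a Blaschke product with zeros $(a_n)_{n\ge1}$ (with multiplicity), $\Omega$ an approach region at $1$ and $m\ge0$ an integer, and assume $\sup_{z\in\Omega}\sum_n\frac{1-|a_n|^2}{|1-\overline{a_n}z|^{2m+2}}<\infty$. For integers $0\le k,l\le m$ and $z\in\Omega\cup\{1\}$ define the sequence $A_{k,l,z}=(A_{k,l,z}(n))_{n\ge1}$ by \[A_{k,l,z}(n)=\frac{1-|a_n|^2}{(1-\overline{a_n}z)^{1+k}(1-a_n\overline{z})^{1+l}}.\] Then for $k+l<2m$, $\lim_{z\to1,\,z\in\Omega}\|A_{k,l,z}-A_{k,l,1}\|_{\ell^1}=0$.
   Context: $\|x\|_{\ell^1}=\sum_n|x(n)|$. An approach region at $1$ is an open simply connected $\Omega\subset\mathbb{D}$ (unit disk) with $\partial\Omega\cap\mathbb{T}=\{1\}$ such that for $z\in\Omega$ close to $1$ the segment $[z,1]\subset\Omega$. *)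

theory Defs
  imports "HOL-Analysis.Analysis"
begin

text \<open>Zero sequence of a Blaschke product, indexed by a set I of naturals
 (I finite for finite Blaschke products, infinite otherwise): all zeros lie
 in the open unit disc and satisfy the Blaschke condition.\<close>
definition blaschke_zeros :: "nat set \<Rightarrow> (nat \<Rightarrow> complex) \<Rightarrow> bool" where
  "blaschke_zeros I a \<longleftrightarrow> (\<forall>n\<in>I. norm (a n) < 1) \<and> (\<lambda>n. 1 - norm (a n)) summable_on I"

text \<open>Approach region at 1.  Since 1 is not in the disc, the segment [z,1]
 is required to lie in Omega except for its endpoint 1.\<close>
definition approach_region :: "complex set \<Rightarrow> bool" where
  "approach_region \<Omega> \<longleftrightarrow> open \<Omega> \<and> simply_connected \<Omega> \<and> \<Omega> \<subseteq> ball 0 1 \<and>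
     frontier \<Omega> \<inter> sphere 0 1 = {1} \<and>
     (\<exists>\<delta>>0. \<forall>z\<in>\<Omega>. dist z 1 < \<delta> \<longrightarrow> closed_segment z 1 - {1} \<subseteq> \<Omega>)"

definition Aseq :: "(nat \<Rightarrow> complex) \<Rightarrow> nat \<Rightarrow> nat \<Rightarrow> complex \<Rightarrow> nat \<Rightarrow> complex" where
  "Aseq a k l z n = (1 - (norm (a n))\<^sup>2) /
     ((1 - cnj (a n) * z) ^ (1 + k) * (1 - a n * cnj z) ^ (1 + l))"

end

theory Submission
  imports Defs
begin

lemma nn_comp:
  fixes f g :: "'a \<Rightarrow> real"
  assumes "g summable_on A" "\<And>x. x\<in>A \<Longrightarrow> 0 \<le> f x" "\<And>x. x\<in>A \<Longrightarrow> f x \<le> g x"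
  shows "f summable_on A"
proof (rule nonneg_bdd_above_summable_on)
  show "\<And>x. x \<in> A \<Longrightarrow> 0 \<le> f x" by fact
  show "bdd_above (sum f ` {F. F \<subseteq> A \<and> finite F})"
  proof (rule bdd_aboveI2[where M="infsum g A"])
    fix F assume F: "F \<in> {F. F \<subseteq> A \<and> finite F}"
    have "sum f F \<le> sum g F" using F assms by (intro sum_mono) auto
    also have "\<dots> \<le> infsum g A"
      using F assms by (intro finite_sum_le_infsum) (auto intro: order_trans)
    finally show "sum f F \<le> infsum g A" .
  qed
qed

lemma pt_bound:
  fixes w d \<delta> :: real and j P :: nat
  assumes "0 \<le> w" "0 \<le> d" "0 < \<delta>" "\<delta> \<le> 1" "j < P" "0 < j"
  shows "w / d^j \<le> \<delta> * (w / d^P) + (1/\<delta>^j) * w"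
proof -
  have R: "0 \<le> \<delta> * (w / d^P)" "0 \<le> (1/\<delta>^j) * w" using assms by auto
  show ?thesis
  proof (cases "d = 0")
    case True
    have "d^j = 0" using True assms(6) by simp
    hence "w / d^j = 0" by simp
    then show ?thesis using R by linarith
  next
    case False
    hence dpos: "d > 0" using assms by simp
    show ?thesis
    proof (cases "d < \<delta>")
      case True
      define r where "r = P - j"
      have r: "P = j + r" "r \<ge> 1" using assms(5) unfolding r_def by auto
      have dP: "d^P = d^j * d^r" unfolding r(1) by (rule power_add)
      have "w / d^j = (w / d^P) * d^r" unfolding dP using dpos by simp
      also have "d^r \<le> d"
      proof -
        have "d^r = d * d^(r-1)" using r(2) by (metis Suc_diff_le diff_Suc_1 power_Suc)
        also have "\<dots> \<le> d * 1" using dpos True assms by (intro mult_left_mono power_le_one) auto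
        finally show ?thesis by simp
      qed
      hence "(w / d^P) * d^r \<le> (w / d^P) * \<delta>" using True assms dpos
        by (intro mult_left_mono) auto
      ultimately show ?thesis using R by (simp add: mult.commute)
    next
      case False
      have "w / d^j \<le> w / \<delta>^j" using False assms
        by (intro divide_left_mono power_mono mult_pos_pos zero_less_power) auto
      then show ?thesis using R by simp
    qed
  qed
qed

lemma tail_bound:
  fixes w G g :: "nat \<Rightarrow> real"
  assumes "\<forall>n\<in>I. 0 \<le> w n" "w summable_on I" "G summable_on I" "infsum G I \<le> C"
    "\<forall>n\<in>I. 0 \<le> G n" "\<forall>n\<in>I. 0 \<le> g n" "\<forall>n\<in>I. g n \<le> \<delta> * G n + (1/\<delta>^j) * w n"
    "0 < \<delta>" "S \<subseteq> I"
  shows "g summable_on S \<and> infsum g S \<le> \<delta>*C + (1/\<delta>^j) * infsum w S"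
proof -
  have hI: "(\<lambda>n. \<delta> * G n + (1/\<delta>^j) * w n) summable_on I"
    using assms by (intro summable_on_add summable_on_cmult_right) auto
  have GS: "G summable_on S" using assms summable_on_subset by blast
  have wS: "w summable_on S" using assms summable_on_subset by blast
  have hS: "(\<lambda>n. \<delta> * G n + (1/\<delta>^j) * w n) summable_on S"
    using hI assms summable_on_subset by blast
  have gS: "g summable_on S" using assms
    by (intro nn_comp[OF hS]) auto
  have "infsum g S \<le> infsum (\<lambda>n. \<delta> * G n + (1/\<delta>^j) * w n) S"
    using assms by (intro infsum_mono gS hS) auto
  also have "\<dots> = \<delta> * infsum G S + (1/\<delta>^j) * infsum w S"
  proof -
    have "infsum (\<lambda>n. \<delta> * G n + (1/\<delta>^j) * w n) S = infsum (\<lambda>n. \<delta> * G n) S + infsum (\<lambda>n. (1/\<delta>^j) * w n) S"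
      using infsum_add[OF summable_on_cmult_right[OF GS] summable_on_cmult_right[OF wS]] .
    also have "infsum (\<lambda>n. \<delta> * G n) S = \<delta> * infsum G S"
      by (rule infsum_cmult_right) (use GS in blast)
    also have "infsum (\<lambda>n. (1/\<delta>^j) * w n) S = (1/\<delta>^j) * infsum w S"
      by (rule infsum_cmult_right) (use wS in blast)
    finally show ?thesis .
  qed
  also have "infsum G S \<le> infsum G I"
    using assms GS by (intro infsum_mono_neutral) auto
  hence "\<delta> * infsum G S \<le> \<delta> * C" using assms by (intro mult_left_mono) auto
  finally show ?thesis using gS by simp
qed

theorem mainTheorem11:
  fixes a :: "nat \<Rightarrow> complex" and I :: "nat set" and \<Omega> :: "complex set"
    and m k l :: nat
  assumes "blaschke_zeros I a"
    and "approach_region \<Omega>"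
    and "\<exists>C. \<forall>z\<in>\<Omega>.
           (\<lambda>n. (1 - (norm (a n))\<^sup>2) / norm (1 - cnj (a n) * z) ^ (2*m+2)) summable_on I \<and>
           (\<Sum>\<^sub>\<infinity>n\<in>I. (1 - (norm (a n))\<^sup>2) / norm (1 - cnj (a n) * z) ^ (2*m+2)) \<le> C"
    and "k \<le> m" and "l \<le> m" and "k + l < 2*m"
  shows "(\<forall>\<^sub>F z in at 1 within \<Omega>. (\<lambda>n. norm (Aseq a k l z n - Aseq a k l 1 n)) summable_on I)
         \<and> ((\<lambda>z. \<Sum>\<^sub>\<infinity>n\<in>I. norm (Aseq a k l z n - Aseq a k l 1 n)) \<longlongrightarrow> 0) (at 1 within \<Omega>)"
proof -
  obtain C where C: "\<forall>z\<in>\<Omega>.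
           (\<lambda>n. (1 - (norm (a n))\<^sup>2) / norm (1 - cnj (a n) * z) ^ (2*m+2)) summable_on I \<and>
           (\<Sum>\<^sub>\<infinity>n\<in>I. (1 - (norm (a n))\<^sup>2) / norm (1 - cnj (a n) * z) ^ (2*m+2)) \<le> C"
    using assms(3) by blast
  define w where "w n = 1 - (norm (a n))\<^sup>2" for n
  define P where "P = 2*m+2"
  define j where "j = k+l+2"
  define G where "G z n = w n / norm (1 - cnj (a n) * z) ^ P" for z n
  define g where "g z n = w n / norm (1 - cnj (a n) * z) ^ j" for z n
  have jP: "j < P" "0 < j" using assms(6) unfolding j_def P_def by auto
  have an: "norm (a n) < 1" if "n \<in> I" for n
    using assms(1) that unfolding blaschke_zeros_def by auto
  have w0: "\<forall>n\<in>I. 0 \<le> w n"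
    unfolding w_def using an by (auto simp: abs_square_le_1 power_le_one less_imp_le)
  have wsum: "w summable_on I"
  proof (rule nn_comp[where g="\<lambda>n. 2 * (1 - norm (a n))"])
    show "(\<lambda>n. 2 * (1 - norm (a n))) summable_on I"
      using assms(1) unfolding blaschke_zeros_def by (intro summable_on_cmult_right) auto
    show "\<And>x. x \<in> I \<Longrightarrow> 0 \<le> w x" using w0 by auto
    fix n assume "n \<in> I"
    hence "norm (a n) < 1" by (rule an)
    have h: "0 \<le> (norm (a n) - 1)^2" by simp
    then show "w n \<le> 2 * (1 - norm (a n))" unfolding w_def
      by (simp add: power2_eq_square algebra_simps)
  qed
  have G0: "\<forall>n\<in>I. 0 \<le> G z n" for z using w0 unfolding G_def by auto
  have g0: "\<forall>n\<in>I. 0 \<le> g z n" for z using w0 unfolding g_def by auto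
  have gG: "\<forall>n\<in>I. g z n \<le> \<delta> * G z n + (1/\<delta>^j) * w n" if "0 < \<delta>" "\<delta> \<le> 1" for z \<delta>
  proof
    fix n assume n: "n \<in> I"
    show "g z n \<le> \<delta> * G z n + (1/\<delta>^j) * w n"
      unfolding g_def G_def by (rule pt_bound) (use w0 that jP n in auto)
  qed
  have dnz: "1 - cnj (a n) * 1 \<noteq> 0" if "n \<in> I" for n
  proof
    assume "1 - cnj (a n) * 1 = 0"
    hence "cnj (a n) = 1" by simp
    hence "norm (a n) = 1" by (metis complex_mod_cnj norm_one)
    with an[OF that] show False by simp
  qed
  have sub: "\<Omega> \<subseteq> ball 0 1" "1 \<in> frontier \<Omega>" using assms(2) unfolding approach_region_def by auto
  have "1 \<notin> \<Omega>" using sub(1) by auto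
  hence "1 islimpt \<Omega>" using sub(2) unfolding islimpt_in_closure frontier_def by simp
  hence ntriv: "\<not> trivial_limit (at 1 within \<Omega>)" by (simp add: trivial_limit_within)
  have evO: "\<forall>\<^sub>F z in at 1 within \<Omega>. z \<in> \<Omega>" by (simp add: eventually_at_filter)
  \<comment> \<open>Fatou at z = 1\<close>
  have CO: "G z summable_on I \<and> infsum (G z) I \<le> C" if "z \<in> \<Omega>" for z
    using C that unfolding G_def w_def P_def by auto
  have Gfin: "sum (G 1) F \<le> C" if F: "finite F" "F \<subseteq> I" for F
  proof (rule tendsto_upperbound[OF _ _ ntriv])
    show "((\<lambda>z. sum (G z) F) \<longlongrightarrow> sum (G 1) F) (at 1 within \<Omega>)"
      unfolding G_def using F dnz by (intro tendsto_intros) auto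
    show "\<forall>\<^sub>F z in at 1 within \<Omega>. sum (G z) F \<le> C"
      using evO
    proof (rule eventually_mono)
      fix z assume z: "z \<in> \<Omega>"
      have "sum (G z) F \<le> infsum (G z) I"
        using CO[OF z] F G0 by (intro finite_sum_le_infsum) auto
      then show "sum (G z) F \<le> C" using CO[OF z] by simp
    qed
  qed
  have G1: "G 1 summable_on I \<and> infsum (G 1) I \<le> C"
  proof
    show S: "G 1 summable_on I"
      using G0 Gfin by (intro nonneg_bdd_above_summable_on bdd_aboveI2[where M=C]) auto
    show "infsum (G 1) I \<le> C" using Gfin by (intro infsum_le_finite_sums[OF S]) auto
  qed
  have Gz: "G z summable_on I \<and> infsum (G z) I \<le> C" if "z \<in> \<Omega> \<or> z = 1" for z
    using that CO G1 by auto
  have tb: "g z summable_on S \<and> infsum (g z) S \<le> \<delta>*C + (1/\<delta>^j) * infsum w S"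
    if "z \<in> \<Omega> \<or> z = 1" "0 < \<delta>" "\<delta> \<le> 1" "S \<subseteq> I" for z \<delta> S
    using tail_bound[OF w0 wsum _ _ G0 g0 gG[OF that(2,3)] that(2,4)] Gz[OF that(1)] by blast
  have normA: "norm (Aseq a k l z n) = g z n" if "n \<in> I" for z n
  proof -
    define D where "D = norm (1 - cnj (a n) * z)"
    have e: "1 - a n * cnj z = cnj (1 - cnj (a n) * z)" by simp
    have e2: "norm (1 - a n * cnj z) = D" unfolding e complex_mod_cnj D_def ..
    have n1: "norm (complex_of_real (1 - (norm (a n))\<^sup>2)) = w n"
      using w0 that unfolding w_def norm_of_real by auto
    have jj: "(1+k)+(1+l) = j" by (simp add: j_def)
    have pw: "D^(1+k) * D^(1+l) = D^j" unfolding jj[symmetric] by (rule power_add[symmetric])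
    show ?thesis
      unfolding Aseq_def g_def norm_divide norm_mult norm_power e2 n1 D_def[symmetric] pw ..
  qed
  define B where "B z n = norm (Aseq a k l z n - Aseq a k l 1 n)" for z n
  have B0: "0 \<le> B z n" for z n unfolding B_def by simp
  have Bg: "B z n \<le> g z n + g 1 n" if "n \<in> I" for z n
    unfolding B_def using normA[OF that] norm_triangle_ineq4 by metis
  have Bsum: "B z summable_on S" if "z \<in> \<Omega>" "S \<subseteq> I" for z S
  proof (rule nn_comp)
    show "(\<lambda>n. g z n + g 1 n) summable_on S"
      using tb[of z 1 S] tb[of 1 1 S] that by (intro summable_on_add) auto
  qed (use B0 Bg that in auto)
  have part1: "\<forall>\<^sub>F z in at 1 within \<Omega>. B z summable_on I"
    using evO by (rule eventually_mono) (use Bsum in auto)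
  have part2: "((\<lambda>z. infsum (B z) I) \<longlongrightarrow> 0) (at 1 within \<Omega>)"
  proof (rule tendstoI)
    fix \<epsilon> :: real assume \<epsilon>: "\<epsilon> > 0"
    define K where "K = \<bar>C\<bar> + 1"
    define \<delta> where "\<delta> = min 1 (\<epsilon> / (8*K))"
    have K: "K > 0" unfolding K_def by simp
    have \<delta>: "0 < \<delta>" "\<delta> \<le> 1" "\<delta> * K \<le> \<epsilon>/8"
      using \<epsilon> K unfolding \<delta>_def by (auto simp: field_simps min_def)
    have \<delta>C: "\<delta> * C \<le> \<epsilon>/8"
    proof -
      have "\<delta> * C \<le> \<delta> * K" unfolding K_def using \<delta> by (intro mult_left_mono) auto
      thus ?thesis using \<delta>(3) by linarith
    qed
    define \<eta> where "\<eta> = \<epsilon> * \<delta>^j / 16"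
    have \<eta>: "\<eta> > 0" unfolding \<eta>_def using \<epsilon> \<delta> by simp
    obtain F where F: "finite F" "F \<subseteq> I" "dist (sum w F) (infsum w I) \<le> \<eta>"
      using infsum_finite_approximation[OF wsum \<eta>] by blast
    have wIF: "w summable_on (I - F)" using wsum summable_on_subset by blast
    have "infsum w I = infsum w (F \<union> (I - F))" using F by (simp add: Un_absorb1)
    also have "\<dots> = sum w F + infsum w (I - F)"
      using F wIF by (subst infsum_Un_disjoint) auto
    finally have tailw: "infsum w (I - F) \<le> \<eta>" using F(3) by (simp add: dist_real_def)
    have tailg: "(1/\<delta>^j) * infsum w (I - F) \<le> \<epsilon>/16"
    proof -
      have "(1/\<delta>^j) * infsum w (I - F) \<le> (1/\<delta>^j) * \<eta>"
        using tailw \<delta> by (intro mult_left_mono) auto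
      also have "\<dots> = \<epsilon>/16" unfolding \<eta>_def using \<delta> by simp
      finally show ?thesis .
    qed
    have limF: "((\<lambda>z. sum (B z) F) \<longlongrightarrow> 0) (at 1 within \<Omega>)"
    proof -
      have "((\<lambda>z. sum (B z) F) \<longlongrightarrow> (\<Sum>n\<in>F. norm (Aseq a k l 1 n - Aseq a k l 1 n))) (at 1 within \<Omega>)"
        unfolding B_def Aseq_def using F dnz
        by (intro tendsto_intros) (auto simp: mult.commute)
      thus ?thesis by simp
    qed
    have evF: "\<forall>\<^sub>F z in at 1 within \<Omega>. sum (B z) F < \<epsilon>/2"
      using order_tendstoD(2)[OF limF, of "\<epsilon>/2"] \<epsilon> by linarith
    show "\<forall>\<^sub>F z in at 1 within \<Omega>. dist (infsum (B z) I) 0 < \<epsilon>"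
      using evF evO
    proof (rule eventually_elim2)
      fix z assume z: "sum (B z) F < \<epsilon>/2" "z \<in> \<Omega>"
      have "infsum (B z) I = infsum (B z) (F \<union> (I - F))" using F by (simp add: Un_absorb1)
      also have "\<dots> = sum (B z) F + infsum (B z) (I - F)"
        using F Bsum[OF z(2)] by (subst infsum_Un_disjoint) auto
      finally have split: "infsum (B z) I = sum (B z) F + infsum (B z) (I - F)" .
      have t1: "g z summable_on (I - F) \<and> infsum (g z) (I - F) \<le> \<delta>*C + (1/\<delta>^j) * infsum w (I - F)"
        using tb[of z \<delta> "I - F"] z \<delta> by auto
      have t2: "g 1 summable_on (I - F) \<and> infsum (g 1) (I - F) \<le> \<delta>*C + (1/\<delta>^j) * infsum w (I - F)"
        using tb[of 1 \<delta> "I - F"] \<delta> by auto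
      have "infsum (B z) (I - F) \<le> infsum (\<lambda>n. g z n + g 1 n) (I - F)"
        using Bsum[OF z(2)] t1 t2 Bg by (intro infsum_mono summable_on_add) auto
      also have "\<dots> = infsum (g z) (I - F) + infsum (g 1) (I - F)"
        using t1 t2 by (simp add: infsum_add)
      finally have "infsum (B z) (I - F) \<le> 3*\<epsilon>/8" using t1 t2 \<delta>C tailg by linarith
      hence "infsum (B z) I < \<epsilon>" using split z \<epsilon> by linarith
      moreover have "0 \<le> infsum (B z) I" using B0 by (simp add: infsum_nonneg)
      ultimately show "dist (infsum (B z) I) 0 < \<epsilon>" by simp
    qed
  qed
  show ?thesis using part1 part2 unfolding B_def by blast
qed

end
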